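(* Consider the Normal Partizan Domination game on a star $K_{1,n}$ with $n\geq 2$, whose universal (center) vertex has color $A$, with $a$ leaves of color $A$ and $b=n-a$ leaves of color $B$. Its value is: $a-b$ if $b<a$; $1/2^{b-a+1}$ if $b\geq a\geq 1$; $(b-1)\cdot\uparrow *$ if $b$ is odd and $a=0$; $(b-1)\cdot\uparrow$ if $b$ is even and $a=0$. If instead the universal vertex has color $B$, the value is $-J$, where $J$ is the value of the game obtained by interchanging the colors $A$ and $B$ on all vertices.
   Context: Normal Partizan Domination game: a finite graph $G$ has each vertex colored $A$, $B$ or $C$. Alice and Bob alternately select a vertex; Alice may only select vertices colored $A$ or $C$, Bob only vertices colored $B$ or $C$. A vertex $u$ dominates $v$ if $u=v$ or $uv$ is an edge. A vertex may be selected only if it is playable, i.e. it dominates at least one vertex not dominated by the previously selected vertices; the game ends when the selected vertices form a dominating set. Under normal play the player unable to move loses. The game is regarded as a partizan combinatorial game with Alice as Left and Bob as Right, and its value is its value in Conway's combinatorial game theory ($\{X\mid Y\}$ has Left options $X$ and Right options $Y$; $G+H$ is the disjunctive sum; $-G$ swaps Left and Right; $G=H$ iff $G+(-H)$ is a second-player win). Notation: integers and dyadic rationals $1/2^k$ are the usual number games; $*=\{0\mid 0\}$; $\uparrow=\{0\mid *\}$; $m\cdot\uparrow$ is the sum of $m$ copies of $\uparrow$ (and $0\cdot\uparrow=0$); $J*$ denotes $J+*$. *)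

theory Defs
  imports Main
begin

section \<open>Short partizan games (Conway), Left = Alice, Right = Bob\<close>

datatype game = Game "game list" "game list"

text \<open>outc G = (Left wins moving first, Right wins moving first), normal play.\<close>
primrec outc :: "game \<Rightarrow> bool \<times> bool" where
  "outc (Game L R) =
     ((\<exists>p\<in>set (map outc L). \<not> snd p), (\<exists>p\<in>set (map outc R). \<not> fst p))"

definition second_player_win :: "game \<Rightarrow> bool" where
  "second_player_win G \<longleftrightarrow> \<not> fst (outc G) \<and> \<not> snd (outc G)"

primrec neg :: "game \<Rightarrow> game" where
  "neg (Game L R) = Game (map neg R) (map neg L)"

lemma size_opt_lt:
  "x \<in> set L \<Longrightarrow> size x < size (Game L R)"
  "x \<in> set R \<Longrightarrow> size x < size (Game L R)"
  by (auto dest: size_list_estimation'[where f = size, OF _ order_refl])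

function gplus :: "game \<Rightarrow> game \<Rightarrow> game" where
  "gplus (Game GL GR) (Game HL HR) =
     Game (map (\<lambda>x. gplus x (Game HL HR)) GL @ map (\<lambda>y. gplus (Game GL GR) y) HL)
          (map (\<lambda>x. gplus x (Game HL HR)) GR @ map (\<lambda>y. gplus (Game GL GR) y) HR)"
  by pat_completeness auto
termination
  by (relation "measure (\<lambda>(g, h). size g + size h)")
     (auto dest: size_opt_lt[where L = GL and R = GR for GL GR]
                 size_opt_lt[where L = HL and R = HR for HL HR])

definition game_eq :: "game \<Rightarrow> game \<Rightarrow> bool" where
  "game_eq G H \<longleftrightarrow> second_player_win (gplus G (neg H))"

definition zero_g :: game where "zero_g = Game [] []"
definition star_g :: game where "star_g = Game [zero_g] [zero_g]"
definition up_g :: game where "up_g = Game [zero_g] [star_g]"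

primrec nat_g :: "nat \<Rightarrow> game" where
  "nat_g 0 = zero_g"
| "nat_g (Suc n) = Game [nat_g n] []"

definition int_g :: "int \<Rightarrow> game" where
  "int_g z = (if 0 \<le> z then nat_g (nat z) else neg (nat_g (nat (- z))))"

text \<open>half_pow k is the number game 1/2^k.\<close>
primrec half_pow :: "nat \<Rightarrow> game" where
  "half_pow 0 = nat_g 1"
| "half_pow (Suc k) = Game [zero_g] [half_pow k]"

primrec ups :: "nat \<Rightarrow> game" where
  "ups 0 = zero_g"
| "ups (Suc m) = gplus up_g (ups m)"

datatype color = ColA | ColB | ColC

definition swap_col :: "color \<Rightarrow> color" where
  "swap_col x = (case x of ColA \<Rightarrow> ColB | ColB \<Rightarrow> ColA | ColC \<Rightarrow> ColC)"

definition cnbhd :: "nat set \<Rightarrow> (nat \<Rightarrow> nat \<Rightarrow> bool) \<Rightarrow> nat \<Rightarrow> nat set" where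
  "cnbhd V E v = {u \<in> V. u = v \<or> E v u}"

lemma dg_term:
  assumes "v \<in> set (sorted_list_of_set V)" "\<not> cnbhd V E v \<subseteq> D"
  shows "card (V - (D \<union> cnbhd V E v)) < card (V - D)"
proof -
  have fin: "finite V" using assms(1) by (cases "finite V") auto
  have "V - (D \<union> cnbhd V E v) \<subset> V - D"
    using assms(2) unfolding cnbhd_def by auto
  then show ?thesis using fin by (meson finite_Diff psubset_card_mono)
qed

text \<open>Game position: D is the set of vertices dominated so far.\<close>
function dg :: "nat set \<Rightarrow> (nat \<Rightarrow> nat \<Rightarrow> bool) \<Rightarrow> (nat \<Rightarrow> color) \<Rightarrow> nat set \<Rightarrow> game" where
  "dg V E c D =
     Game (map (\<lambda>v. dg V E c (D \<union> cnbhd V E v))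
             (filter (\<lambda>v. c v \<noteq> ColB \<and> \<not> cnbhd V E v \<subseteq> D) (sorted_list_of_set V)))
          (map (\<lambda>v. dg V E c (D \<union> cnbhd V E v))
             (filter (\<lambda>v. c v \<noteq> ColA \<and> \<not> cnbhd V E v \<subseteq> D) (sorted_list_of_set V)))"
  by pat_completeness auto
termination
  by (relation "measure (\<lambda>(V, E, c, D). card (V - D))") (auto intro: dg_term)

definition dom_game :: "nat set \<Rightarrow> (nat \<Rightarrow> nat \<Rightarrow> bool) \<Rightarrow> (nat \<Rightarrow> color) \<Rightarrow> game" where
  "dom_game V E c = dg V E c {}"

text \<open>Star K_{1,n}: vertex 0 is the centre, vertices 1..n are the leaves.\<close>
definition star_adj :: "nat \<Rightarrow> nat \<Rightarrow> bool" where
  "star_adj u v \<longleftrightarrow> (u = 0 \<and> v \<noteq> 0) \<or> (v = 0 \<and> u \<noteq> 0)"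

definition star_game :: "nat \<Rightarrow> (nat \<Rightarrow> color) \<Rightarrow> game" where
  "star_game n c = dom_game {0..n} star_adj c"

end

theory Submission
  imports Defs
begin


primrec lefts :: "game \<Rightarrow> game list" where "lefts (Game L R) = L"
primrec rights :: "game \<Rightarrow> game list" where "rights (Game L R) = R"

lemma game_eta: "G = Game (lefts G) (rights G)" by (cases G) auto

lemma size_lefts: "x \<in> set (lefts G) \<Longrightarrow> size x < size G"
  by (cases G) (simp only: lefts.simps size_opt_lt)
lemma size_rights: "x \<in> set (rights G) \<Longrightarrow> size x < size G"
  by (cases G) (simp only: rights.simps size_opt_lt)

lemma lefts_plus: "lefts (gplus G H) = map (\<lambda>x. gplus x H) (lefts G) @ map (gplus G) (lefts H)"
  by (cases G; cases H) auto
lemma rights_plus: "rights (gplus G H) = map (\<lambda>x. gplus x H) (rights G) @ map (gplus G) (rights H)"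
  by (cases G; cases H) auto
lemma lefts_neg: "lefts (neg G) = map neg (rights G)" by (cases G) auto
lemma rights_neg: "rights (neg G) = map neg (lefts G)" by (cases G) auto

lemma outc_eq: "outc G = ((\<exists>l\<in>set (lefts G). \<not> snd (outc l)), (\<exists>r\<in>set (rights G). \<not> fst (outc r)))"
  by (cases G) auto

lemma neg_neg[simp]: "neg (neg G) = G"
proof (induction G)
  case (Game L R)
  then show ?case by (auto simp: map_idI)
qed

lemma outc_neg: "outc (neg G) = prod.swap (outc G)"
proof (induction G)
  case (Game L R)
  then show ?case by auto
qed

lemma neg_plus: "neg (gplus A B) = gplus (neg A) (neg B)"
proof (induction "size A + size B" arbitrary: A B rule: less_induct)
  case less
  show ?case
  proof (cases A; cases B)
    fix AL AR BL BR assume AB: "A = Game AL AR" "B = Game BL BR"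
    have "x \<in> set AL \<Longrightarrow> size x < size A" "x \<in> set AR \<Longrightarrow> size x < size A"
         "x \<in> set BL \<Longrightarrow> size x < size B" "x \<in> set BR \<Longrightarrow> size x < size B" for x
      using AB size_opt_lt by auto
    then show ?thesis using AB less by auto
  qed
qed

lemma plus_zero[simp]: "gplus G zero_g = G"
proof (induction G)
  case (Game L R)
  then show ?case by (auto simp: zero_g_def map_idI)
qed

lemma zero_plus[simp]: "gplus zero_g G = G"
proof (induction G)
  case (Game L R)
  then show ?case by (auto simp: zero_g_def map_idI)
qed

lemma neg_zero[simp]: "neg zero_g = zero_g" by (simp add: zero_g_def)
lemma neg_star[simp]: "neg star_g = star_g" by (simp add: star_g_def)

lemma outc_comm: "outc (gplus A B) = outc (gplus B A)"
proof (induction "size A + size B" arbitrary: A B rule: less_induct)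
  case less
  have IH: "\<And>X Y. size X + size Y < size A + size B \<Longrightarrow> outc (gplus X Y) = outc (gplus Y X)"
    using less by blast
  have 1: "(\<lambda>x. outc (gplus x B)) ` set (lefts A) = (\<lambda>x. outc (gplus B x)) ` set (lefts A)"
    by (intro image_cong refl, rule IH, use size_lefts in force)
  have 2: "(\<lambda>x. outc (gplus A x)) ` set (lefts B) = (\<lambda>x. outc (gplus x A)) ` set (lefts B)"
    by (intro image_cong refl, rule IH, use size_lefts in force)
  have 3: "(\<lambda>x. outc (gplus x B)) ` set (rights A) = (\<lambda>x. outc (gplus B x)) ` set (rights A)"
    by (intro image_cong refl, rule IH, use size_rights in force)
  have 4: "(\<lambda>x. outc (gplus A x)) ` set (rights B) = (\<lambda>x. outc (gplus x A)) ` set (rights B)"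
    by (intro image_cong refl, rule IH, use size_rights in force)
  have "outc (gplus A B) = ((\<exists>p\<in>(\<lambda>x. outc (gplus x B)) ` set (lefts A) \<union> (\<lambda>x. outc (gplus A x)) ` set (lefts B). \<not> snd p),
      (\<exists>p\<in>(\<lambda>x. outc (gplus x B)) ` set (rights A) \<union> (\<lambda>x. outc (gplus A x)) ` set (rights B). \<not> fst p))"
    by (subst outc_eq) (auto simp: lefts_plus rights_plus)
  also have "\<dots> = ((\<exists>p\<in>(\<lambda>x. outc (gplus B x)) ` set (lefts A) \<union> (\<lambda>x. outc (gplus x A)) ` set (lefts B). \<not> snd p),
      (\<exists>p\<in>(\<lambda>x. outc (gplus B x)) ` set (rights A) \<union> (\<lambda>x. outc (gplus x A)) ` set (rights B). \<not> fst p))"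
    using 1 2 3 4 by simp
  also have "\<dots> = outc (gplus B A)"
    by (subst (2) outc_eq) (auto simp: lefts_plus rights_plus)
  finally show ?case .
qed

definition ge :: "game \<Rightarrow> game \<Rightarrow> bool" where "ge G H \<longleftrightarrow> \<not> snd (outc (gplus G (neg H)))"
definition gf :: "game \<Rightarrow> game \<Rightarrow> bool" where "gf G H \<longleftrightarrow> fst (outc (gplus G (neg H)))"

lemma ge_rec: "ge G H \<longleftrightarrow> (\<forall>r\<in>set (rights G). gf r H) \<and> (\<forall>l\<in>set (lefts H). gf G l)"
  unfolding ge_def gf_def
  by (subst outc_eq) (auto simp: rights_plus rights_neg)

lemma gf_rec: "gf G H \<longleftrightarrow> (\<exists>l\<in>set (lefts G). ge l H) \<or> (\<exists>r\<in>set (rights H). ge G r)"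
  unfolding ge_def gf_def
  by (subst outc_eq) (auto simp: lefts_plus lefts_neg)

lemma gf_iff: "gf G H \<longleftrightarrow> \<not> ge H G"
proof -
  have "fst (outc (gplus G (neg H))) = snd (outc (neg (gplus G (neg H))))"
    by (simp add: outc_neg)
  also have "\<dots> = snd (outc (gplus H (neg G)))"
    by (simp add: neg_plus outc_comm)
  finally show ?thesis unfolding ge_def gf_def by simp
qed

lemma eqv_iff: "game_eq G H \<longleftrightarrow> ge G H \<and> ge H G"
  unfolding game_eq_def second_player_win_def
  using gf_iff[of G H] unfolding ge_def gf_def by auto

lemma ge_intro: "(\<And>r. r \<in> set (rights G) \<Longrightarrow> gf r H) \<Longrightarrow> (\<And>l. l \<in> set (lefts H) \<Longrightarrow> gf G l) \<Longrightarrow> ge G H"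
  using ge_rec by blast
lemma gf_introL: "l \<in> set (lefts G) \<Longrightarrow> ge l H \<Longrightarrow> gf G H"
  using gf_rec by blast
lemma gf_introR: "r \<in> set (rights H) \<Longrightarrow> ge G r \<Longrightarrow> gf G H"
  using gf_rec by blast
lemma ge_rightD: "ge G H \<Longrightarrow> r \<in> set (rights G) \<Longrightarrow> gf r H"
  using ge_rec by blast
lemma ge_leftD: "ge G H \<Longrightarrow> l \<in> set (lefts H) \<Longrightarrow> gf G l"
  using ge_rec by blast

lemma ge_refl[simp]: "ge G G"
proof (induction G)
  case (Game L R)
  show ?case
    by (rule ge_intro) (auto intro: gf_introL gf_introR Game)
qed

lemma trans_all:
  "(ge A B \<longrightarrow> ge B C \<longrightarrow> ge A C) \<and> (gf A B \<longrightarrow> ge B C \<longrightarrow> gf A C) \<and> (ge A B \<longrightarrow> gf B C \<longrightarrow> gf A C)"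
proof (induction "size A + size B + size C" arbitrary: A B C rule: less_induct)
  case less
  note IH = less[rule_format]
  have t1: "ge A C" if h: "ge A B" "ge B C"
  proof (rule ge_intro)
    fix r assume r: "r \<in> set (rights A)"
    have "gf r B" using ge_rightD[OF h(1) r] .
    then show "gf r C" using IH[of r B C] h(2) size_rights[OF r] by auto
  next
    fix l assume l: "l \<in> set (lefts C)"
    have "gf B l" using ge_leftD[OF h(2) l] .
    then show "gf A l" using IH[of A B l] h(1) size_lefts[OF l] by auto
  qed
  have t2: "gf A C" if h: "gf A B" "ge B C"
  proof -
    from h(1) consider l where "l \<in> set (lefts A)" "ge l B" | r where "r \<in> set (rights B)" "ge A r"
      using gf_rec by blast
    then show ?thesis
    proof cases
      case 1
      then have "ge l C" using IH[of l B C] h(2) size_lefts[OF 1(1)] by auto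
      then show ?thesis using 1 gf_introL by blast
    next
      case 2
      have "gf r C" using ge_rightD[OF h(2) 2(1)] .
      then show ?thesis using IH[of A r C] 2 size_rights[OF 2(1)] by auto
    qed
  qed
  have t3: "gf A C" if h: "ge A B" "gf B C"
  proof -
    from h(2) consider l where "l \<in> set (lefts B)" "ge l C" | r where "r \<in> set (rights C)" "ge B r"
      using gf_rec by blast
    then show ?thesis
    proof cases
      case 1
      have "gf A l" using ge_leftD[OF h(1) 1(1)] .
      then show ?thesis using IH[of A l C] 1 size_lefts[OF 1(1)] by auto
    next
      case 2
      then have "ge A r" using IH[of A B r] h(1) size_rights[OF 2(1)] by auto
      then show ?thesis using 2 gf_introR by blast
    qed
  qed
  show ?case using t1 t2 t3 by blast
qed

lemma ge_trans: "ge A B \<Longrightarrow> ge B C \<Longrightarrow> ge A C" using trans_all by blast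
lemma gf_ge_trans: "gf A B \<Longrightarrow> ge B C \<Longrightarrow> gf A C" using trans_all by blast
lemma ge_gf_trans: "ge A B \<Longrightarrow> gf B C \<Longrightarrow> gf A C" using trans_all by blast

lemma eqv_refl[simp]: "game_eq G G" by (simp add: eqv_iff)
lemma eqv_sym: "game_eq G H \<Longrightarrow> game_eq H G" by (simp add: eqv_iff)
lemma eqv_trans: "game_eq A B \<Longrightarrow> game_eq B C \<Longrightarrow> game_eq A C"
  by (meson eqv_iff ge_trans)
lemma eqv_ge: "game_eq A B \<Longrightarrow> ge A B" by (simp add: eqv_iff)
lemma eqv_ge': "game_eq A B \<Longrightarrow> ge B A" by (simp add: eqv_iff)

lemma opt_eqv:
  assumes "\<And>x. x \<in> set (lefts G) \<Longrightarrow> \<exists>y\<in>set (lefts H). game_eq x y"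
    and "\<And>y. y \<in> set (lefts H) \<Longrightarrow> \<exists>x\<in>set (lefts G). game_eq x y"
    and "\<And>x. x \<in> set (rights G) \<Longrightarrow> \<exists>y\<in>set (rights H). game_eq x y"
    and "\<And>y. y \<in> set (rights H) \<Longrightarrow> \<exists>x\<in>set (rights G). game_eq x y"
  shows "game_eq G H"
  unfolding eqv_iff
proof
  show "ge G H"
    by (rule ge_intro) (meson assms eqv_ge gf_introL gf_introR)+
  show "ge H G"
    by (rule ge_intro) (meson assms eqv_ge' gf_introL gf_introR)+
qed

lemma mono_all: "(ge A B \<longrightarrow> ge (gplus A C) (gplus B C)) \<and> (gf A B \<longrightarrow> gf (gplus A C) (gplus B C))"
proof (induction "size A + size B + size C" arbitrary: A B C rule: less_induct)
  case less
  note IH = less[rule_format]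
  have t1: "ge (gplus A C) (gplus B C)" if h: "ge A B"
  proof (rule ge_intro)
    fix r assume "r \<in> set (rights (gplus A C))"
    then consider a where "a \<in> set (rights A)" "r = gplus a C" | c where "c \<in> set (rights C)" "r = gplus A c"
      by (auto simp: rights_plus)
    then show "gf r (gplus B C)"
    proof cases
      case 1
      then show ?thesis using IH[of a B C] ge_rightD[OF h 1(1)] size_rights[OF 1(1)] by auto
    next
      case 2
      have "ge (gplus A c) (gplus B c)" using IH[of A B c] h size_rights[OF 2(1)] by auto
      then show ?thesis using 2 by (intro gf_introR[of "gplus B c"]) (auto simp: rights_plus)
    qed
  next
    fix l assume "l \<in> set (lefts (gplus B C))"
    then consider b where "b \<in> set (lefts B)" "l = gplus b C" | c where "c \<in> set (lefts C)" "l = gplus B c"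
      by (auto simp: lefts_plus)
    then show "gf (gplus A C) l"
    proof cases
      case 1
      then show ?thesis using IH[of A b C] ge_leftD[OF h 1(1)] size_lefts[OF 1(1)] by auto
    next
      case 2
      have "ge (gplus A c) (gplus B c)" using IH[of A B c] h size_lefts[OF 2(1)] by auto
      then show ?thesis using 2 by (intro gf_introL[of "gplus A c"]) (auto simp: lefts_plus)
    qed
  qed
  have t2: "gf (gplus A C) (gplus B C)" if h: "gf A B"
  proof -
    from h consider l where "l \<in> set (lefts A)" "ge l B" | r where "r \<in> set (rights B)" "ge A r"
      using gf_rec by blast
    then show ?thesis
    proof cases
      case 1
      then have "ge (gplus l C) (gplus B C)" using IH[of l B C] size_lefts[OF 1(1)] by auto
      then show ?thesis using 1 by (intro gf_introL[of "gplus l C"]) (auto simp: lefts_plus)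
    next
      case 2
      then have "ge (gplus A C) (gplus r C)" using IH[of A r C] size_rights[OF 2(1)] by auto
      then show ?thesis using 2 by (intro gf_introR[of "gplus r C"]) (auto simp: rights_plus)
    qed
  qed
  show ?case using t1 t2 by blast
qed


lemma plus_comm: "game_eq (gplus A B) (gplus B A)"
proof (induction "size A + size B" arbitrary: A B rule: less_induct)
  case less
  have IH: "\<And>X Y. size X + size Y < size A + size B \<Longrightarrow> game_eq (gplus X Y) (gplus Y X)"
    using less by blast
  have a: "x \<in> set (lefts A) \<or> x \<in> set (rights A) \<Longrightarrow> game_eq (gplus x B) (gplus B x)" for x
    by (rule IH) (auto dest: size_lefts size_rights)
  have b: "x \<in> set (lefts B) \<or> x \<in> set (rights B) \<Longrightarrow> game_eq (gplus A x) (gplus x A)" for x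
    by (rule IH) (auto dest: size_lefts size_rights)
  have a': "x \<in> set (lefts A) \<or> x \<in> set (rights A) \<Longrightarrow> game_eq (gplus B x) (gplus x B)" for x
    using a eqv_sym by blast
  have b': "x \<in> set (lefts B) \<or> x \<in> set (rights B) \<Longrightarrow> game_eq (gplus x A) (gplus A x)" for x
    using b eqv_sym by blast
  show ?case
    by (rule opt_eqv) (simp_all add: lefts_plus rights_plus; blast intro: a b a' b')+
qed

lemma plus_assoc: "game_eq (gplus (gplus A B) C) (gplus A (gplus B C))"
proof (induction "size A + size B + size C" arbitrary: A B C rule: less_induct)
  case less
  have IH: "\<And>X Y Z. size X + size Y + size Z < size A + size B + size C \<Longrightarrow> game_eq (gplus (gplus X Y) Z) (gplus X (gplus Y Z))"
    using less by blast
  have a: "x \<in> set (lefts A) \<or> x \<in> set (rights A) \<Longrightarrow> game_eq (gplus (gplus x B) C) (gplus x (gplus B C))" for x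
    by (rule IH) (auto dest: size_lefts size_rights)
  have b: "x \<in> set (lefts B) \<or> x \<in> set (rights B) \<Longrightarrow> game_eq (gplus (gplus A x) C) (gplus A (gplus x C))" for x
    by (rule IH) (auto dest: size_lefts size_rights)
  have c: "x \<in> set (lefts C) \<or> x \<in> set (rights C) \<Longrightarrow> game_eq (gplus (gplus A B) x) (gplus A (gplus B x))" for x
    by (rule IH) (auto dest: size_lefts size_rights)
  have a': "x \<in> set (lefts A) \<or> x \<in> set (rights A) \<Longrightarrow> game_eq (gplus x (gplus B C)) (gplus (gplus x B) C)" for x
    using a eqv_sym by blast
  have b': "x \<in> set (lefts B) \<or> x \<in> set (rights B) \<Longrightarrow> game_eq (gplus A (gplus x C)) (gplus (gplus A x) C)" for x
    using b eqv_sym by blast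
  have c': "x \<in> set (lefts C) \<or> x \<in> set (rights C) \<Longrightarrow> game_eq (gplus A (gplus B x)) (gplus (gplus A B) x)" for x
    using c eqv_sym by blast
  show ?case
    by (rule opt_eqv) (simp_all add: lefts_plus rights_plus; blast intro: a b c a' b' c')+
qed

lemma mono_r: "ge A B \<Longrightarrow> ge (gplus A C) (gplus B C)" using mono_all by blast
lemma mono_r_gf: "gf A B \<Longrightarrow> gf (gplus A C) (gplus B C)" using mono_all by blast

lemma ge_cong: "game_eq A A' \<Longrightarrow> game_eq B B' \<Longrightarrow> ge A B \<Longrightarrow> ge A' B'"
  by (meson eqv_iff ge_trans)
lemma gf_cong: "game_eq A A' \<Longrightarrow> game_eq B B' \<Longrightarrow> gf A B \<Longrightarrow> gf A' B'"
  by (meson eqv_iff ge_gf_trans gf_ge_trans)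

lemma mono_l: "ge A B \<Longrightarrow> ge (gplus C A) (gplus C B)"
  by (meson ge_cong mono_r plus_comm)

lemma plus_cong_r: "game_eq A B \<Longrightarrow> game_eq (gplus A C) (gplus B C)"
  by (simp add: eqv_iff mono_r)
lemma plus_cong_l: "game_eq A B \<Longrightarrow> game_eq (gplus C A) (gplus C B)"
  by (simp add: eqv_iff mono_l)

lemma ge_zero_iff: "ge G zero_g \<longleftrightarrow> \<not> snd (outc G)" by (simp add: ge_def)

lemma inv_zero: "game_eq (gplus A (neg A)) zero_g"
  using eqv_refl[of A] unfolding game_eq_def by simp

lemma star_star: "game_eq (gplus star_g star_g) zero_g"
  using inv_zero[of star_g] by simp



lemma lr_simps[simp]:
  "lefts zero_g = []" "rights zero_g = []"
  "lefts star_g = [zero_g]" "rights star_g = [zero_g]"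
  "lefts up_g = [zero_g]" "rights up_g = [star_g]"
  by (simp_all add: zero_g_def star_g_def up_g_def)

fun hg :: "nat \<Rightarrow> nat \<Rightarrow> game" where
  "hg 0 0 = zero_g"
| "hg (Suc p) 0 = Game [zero_g, hg p 0] []"
| "hg 0 (Suc q) = Game [zero_g] [hg 0 q]"
| "hg (Suc p) (Suc q) = Game [zero_g, hg p (Suc q)] [hg (Suc p) q]"

declare hg.simps(2-4)[simp del]
lemmas [trans] = eqv_trans

lemma hg_lr:
  "lefts (hg (Suc p) q) = [zero_g, hg p q]"
  "rights (hg (Suc p) q) = (if q = 0 then [] else [hg (Suc p) (q - 1)])"
  "lefts (hg 0 (Suc q)) = [zero_g]"
  "rights (hg 0 (Suc q)) = [hg 0 q]"
  by (cases q; simp add: hg.simps)+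

lemma hg01: "hg 0 1 = star_g" by (simp add: star_g_def hg.simps)
lemma hg02: "hg 0 2 = up_g" by (simp add: numeral_2_eq_2 star_g_def up_g_def hg.simps)

lemma E_GF: "(j \<le> i \<and> i \<noteq> j + 1 \<longrightarrow> ge (hg 0 i) (hg 0 j)) \<and> (j \<le> i + 1 \<and> i \<noteq> j \<longrightarrow> gf (hg 0 i) (hg 0 j))"
proof (induction "i + j" arbitrary: i j rule: less_induct)
  case less
  note IH = less[rule_format]
  have t1: "ge (hg 0 i) (hg 0 j)" if h: "j \<le> i" "i \<noteq> j + 1"
  proof (cases i)
    case 0 then show ?thesis using h by simp
  next
    case (Suc i')
    show ?thesis
    proof (rule ge_intro)
      fix r assume "r \<in> set (rights (hg 0 i))"
      then have "r = hg 0 i'" using Suc by (simp add: hg_lr)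
      then show "gf r (hg 0 j)" using IH[of i' j] Suc h by auto
    next
      fix l assume l: "l \<in> set (lefts (hg 0 j))"
      then obtain j' where j': "j = Suc j'" by (cases j) auto
      then have "l = zero_g" using l by (simp add: hg_lr)
      then show "gf (hg 0 i) l" using IH[of i 0] Suc h j' by auto
    qed
  qed
  have t2: "gf (hg 0 i) (hg 0 j)" if h: "j \<le> i + 1" "i \<noteq> j"
  proof (cases j)
    case 0
    then obtain i' where "i = Suc i'" using h by (cases i) auto
    then show ?thesis using 0 by (intro gf_introL[of zero_g]) (auto simp: hg_lr)
  next
    case (Suc j')
    have "ge (hg 0 i) (hg 0 j')" using IH[of i j'] Suc h by auto
    then show ?thesis using Suc by (intro gf_introR[of "hg 0 j'"]) (auto simp: hg_lr)
  qed
  show ?case using t1 t2 by blast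
qed

lemma E_ge: "j \<le> i \<Longrightarrow> i \<noteq> j + 1 \<Longrightarrow> ge (hg 0 i) (hg 0 j)" using E_GF by blast
lemma E_gf: "j \<le> i + 1 \<Longrightarrow> i \<noteq> j \<Longrightarrow> gf (hg 0 i) (hg 0 j)" using E_GF by blast
lemma E_ge0: "i \<noteq> 1 \<Longrightarrow> ge (hg 0 i) zero_g" using E_ge[of 0 i] by simp

lemma zero_in_half: "zero_g \<in> set (lefts (half_pow j))"
  by (cases j) (simp_all add: zero_g_def)

lemma HE: "ge (half_pow j) (hg 0 s)"
proof (induction s arbitrary: j)
  case 0
  show ?case
  proof (rule ge_intro)
    fix r assume r: "r \<in> set (rights (half_pow j))"
    then obtain j' where "j = Suc j'" "r = half_pow j'" by (cases j) auto
    then show "gf r (hg 0 0)" by (auto intro: gf_introL[OF zero_in_half])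
  qed simp
next
  case (Suc s)
  show ?case
  proof (rule ge_intro)
    fix r assume r: "r \<in> set (rights (half_pow j))"
    then obtain j' where "j = Suc j'" "r = half_pow j'" by (cases j) auto
    then show "gf r (hg 0 (Suc s))" using Suc by (intro gf_introR[of "hg 0 s"]) (auto simp: hg_lr)
  next
    fix l assume "l \<in> set (lefts (hg 0 (Suc s)))"
    then have "l = zero_g" by (simp add: hg_lr)
    then show "gf (half_pow j) l" by (auto intro: gf_introL[OF zero_in_half])
  qed
qed

lemma ge_up_zero: "ge up_g zero_g"
  by (rule ge_intro) (auto intro: gf_introL[of zero_g])

lemma gf_star_R: "ge G zero_g \<Longrightarrow> gf G star_g"
  by (rule gf_introR[of zero_g]) auto

lemma lefts_Es: "lefts (gplus (hg 0 (Suc k)) star_g) = [star_g, hg 0 (Suc k)]"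
  by (simp add: lefts_plus hg_lr)
lemma rights_Es: "rights (gplus (hg 0 (Suc k)) star_g) = [gplus (hg 0 k) star_g, hg 0 (Suc k)]"
  by (simp add: rights_plus hg_lr)

lemma E_ii: "ge (hg 0 (Suc (Suc k))) (gplus (hg 0 (Suc k)) star_g)"
proof (rule ge_intro)
  fix r assume "r \<in> set (rights (hg 0 (Suc (Suc k))))"
  then have "r = hg 0 (Suc k)" by (simp add: hg_lr)
  then show "gf r (gplus (hg 0 (Suc k)) star_g)"
    by (intro gf_introR[of "hg 0 (Suc k)"]) (auto simp: rights_Es)
next
  fix l assume "l \<in> set (lefts (gplus (hg 0 (Suc k)) star_g))"
  then have "l = star_g \<or> l = hg 0 (Suc k)" by (simp add: lefts_Es)
  then show "gf (hg 0 (Suc (Suc k))) l"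
    using E_gf[of "Suc k" "Suc (Suc k)"] gf_star_R[OF E_ge0[of "Suc (Suc k)"]] by auto
qed

lemma E_i_from_J:
  assumes J: "gf (hg 0 (Suc (Suc k))) (gplus (hg 0 (Suc k)) star_g)"
  shows "ge (hg 0 (Suc (Suc (Suc k)))) (gplus (hg 0 (Suc k)) star_g)"
proof (rule ge_intro)
  fix r assume "r \<in> set (rights (hg 0 (Suc (Suc (Suc k)))))"
  then have "r = hg 0 (Suc (Suc k))" by (simp add: hg_lr)
  then show "gf r (gplus (hg 0 (Suc k)) star_g)" using J by simp
next
  fix l assume "l \<in> set (lefts (gplus (hg 0 (Suc k)) star_g))"
  then have "l = star_g \<or> l = hg 0 (Suc k)" by (simp add: lefts_Es)
  then show "gf (hg 0 (Suc (Suc (Suc k)))) l"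
    using E_gf[of "Suc k" "Suc (Suc (Suc k))"] gf_star_R[OF E_ge0[of "Suc (Suc (Suc k))"]] by auto
qed

lemma E_J: "gf (hg 0 (Suc (Suc k))) (gplus (hg 0 (Suc k)) star_g)"
proof (induction k)
  case 0
  have "ge zero_g (gplus star_g star_g)" using star_star eqv_ge' by blast
  then show ?case
    by (intro gf_introL[of zero_g]) (auto simp: hg_lr hg01[unfolded One_nat_def] numeral_2_eq_2)
next
  case (Suc k)
  have "ge (hg 0 (Suc (Suc (Suc k)))) (gplus (hg 0 (Suc k)) star_g)" using E_i_from_J[OF Suc] .
  then show ?case by (intro gf_introR[of "gplus (hg 0 (Suc k)) star_g"]) (auto simp: rights_Es)
qed

lemma sus: "game_eq (gplus star_g (gplus up_g star_g)) up_g"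
proof -
  have "game_eq (gplus star_g (gplus up_g star_g)) (gplus star_g (gplus star_g up_g))"
    by (rule plus_cong_l[OF plus_comm])
  also have "game_eq \<dots> (gplus (gplus star_g star_g) up_g)"
    by (rule eqv_sym[OF plus_assoc])
  finally have 1: "game_eq (gplus star_g (gplus up_g star_g)) (gplus (gplus star_g star_g) up_g)" .
  have "game_eq (gplus (gplus star_g star_g) up_g) (gplus zero_g up_g)"
    by (rule plus_cong_r[OF star_star])
  then show ?thesis using 1 eqv_trans by auto
qed

lemma lefts_W: "lefts (gplus (hg 0 (Suc k)) (gplus up_g star_g)) =
   [gplus up_g star_g, gplus (hg 0 (Suc k)) star_g, gplus (hg 0 (Suc k)) up_g]"
  by (simp add: lefts_plus hg_lr)
lemma rights_W: "rights (gplus (hg 0 (Suc k)) (gplus up_g star_g)) =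
   [gplus (hg 0 k) (gplus up_g star_g), gplus (hg 0 (Suc k)) (gplus star_g star_g), gplus (hg 0 (Suc k)) up_g]"
  by (simp add: rights_plus hg_lr)

lemma ge_plus_up: "ge (gplus G up_g) G"
  using mono_l[OF ge_up_zero, of G] by simp

lemma rights_U: "rights (gplus up_g star_g) = [gplus star_g star_g, up_g]"
  by (simp add: rights_plus)

lemma E_W_step:
  assumes H: "ge (gplus (hg 0 (Suc k)) (gplus up_g star_g)) (hg 0 (Suc (Suc k)))"
  shows "game_eq (hg 0 (Suc (Suc (Suc k)))) (gplus (hg 0 (Suc (Suc k))) (gplus up_g star_g))"
proof -
  let ?E = "hg 0 (Suc (Suc k))" and ?R = "hg 0 (Suc (Suc (Suc k)))" and ?U = "gplus up_g star_g"
  have EE: "game_eq (gplus ?E (gplus star_g star_g)) ?E"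
    using plus_cong_l[OF star_star, of ?E] by simp
  have R0: "ge ?R zero_g" by (rule E_ge0) simp
  have E0: "ge ?E zero_g" by (rule E_ge0) simp
  have 1: "ge ?R (gplus ?E ?U)"
  proof (rule ge_intro)
    fix r assume "r \<in> set (rights ?R)"
    then have "r = ?E" by (simp add: hg_lr)
    then show "gf r (gplus ?E ?U)"
      using EE by (intro gf_introR[of "gplus ?E (gplus star_g star_g)"])
        (auto simp: rights_W eqv_ge')
  next
    fix l assume "l \<in> set (lefts (gplus ?E ?U))"
    then have "l = ?U \<or> l = gplus ?E star_g \<or> l = gplus ?E up_g" by (simp add: lefts_W)
    moreover have "gf ?R ?U"
      using ge_cong[OF eqv_refl eqv_sym[OF star_star] R0]
      by (intro gf_introR[of "gplus star_g star_g"]) (auto simp: rights_U)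
    moreover have "gf ?R (gplus ?E star_g)" using E_J[of "Suc k"] .
    moreover have "gf ?R (gplus ?E up_g)"
      using E_ii[of "Suc k"] by (intro gf_introR[of "gplus ?E star_g"]) (auto simp: rights_plus hg_lr)
    ultimately show "gf ?R l" by blast
  qed
  have 2: "ge (gplus ?E ?U) ?R"
  proof (rule ge_intro)
    fix r assume "r \<in> set (rights (gplus ?E ?U))"
    then have "r = gplus (hg 0 (Suc k)) ?U \<or> r = gplus ?E (gplus star_g star_g) \<or> r = gplus ?E up_g"
      by (simp add: rights_W)
    moreover have "ge r ?E" if "r = gplus (hg 0 (Suc k)) ?U \<or> r = gplus ?E (gplus star_g star_g) \<or> r = gplus ?E up_g"
      using that H EE ge_plus_up eqv_ge by blast
    ultimately show "gf r ?R" by (intro gf_introR[of ?E]) (auto simp: hg_lr)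
  next
    fix l assume "l \<in> set (lefts ?R)"
    then have "l = zero_g" by (simp add: hg_lr)
    then show "gf (gplus ?E ?U) l"
      using ge_trans[OF ge_plus_up E0] by (intro gf_introL[of "gplus ?E up_g"]) (auto simp: lefts_W)
  qed
  show ?thesis using 1 2 by (simp add: eqv_iff)
qed

lemma E_W: "game_eq (hg 0 (Suc (Suc (Suc k)))) (gplus (hg 0 (Suc (Suc k))) (gplus up_g star_g))"
proof (induction k)
  case 0
  show ?case
    by (rule E_W_step) (use eqv_ge[OF sus] in \<open>simp add: hg01[unfolded One_nat_def] hg02[unfolded numeral_2_eq_2]\<close>)
next
  case (Suc k)
  show ?case by (rule E_W_step) (rule eqv_ge'[OF Suc])
qed

definition valg :: "nat \<Rightarrow> nat \<Rightarrow> game" where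
  "valg a b = (if b < a then int_g (int a - int b)
               else if 1 \<le> a then half_pow (b - a + 1)
               else if odd b then gplus (ups (b - 1)) star_g
               else ups (b - 1))"

lemma alg1: "game_eq (gplus X (gplus up_g star_g)) (gplus (gplus up_g X) star_g)"
proof -
  have "game_eq (gplus X (gplus up_g star_g)) (gplus (gplus X up_g) star_g)"
    by (rule eqv_sym[OF plus_assoc])
  also have "game_eq \<dots> (gplus (gplus up_g X) star_g)"
    by (rule plus_cong_r[OF plus_comm])
  finally show ?thesis .
qed

lemma alg2: "game_eq (gplus (gplus X star_g) (gplus up_g star_g)) (gplus up_g X)"
proof -
  have "game_eq (gplus (gplus X star_g) (gplus up_g star_g)) (gplus X (gplus star_g (gplus up_g star_g)))"
    by (rule plus_assoc)
  also have "game_eq \<dots> (gplus X up_g)"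
    by (rule plus_cong_l[OF sus])
  also have "game_eq \<dots> (gplus up_g X)"
    by (rule plus_comm)
  finally show ?thesis .
qed

lemma E_val: "game_eq (hg 0 q) (valg 0 q)"
proof (induction q rule: less_induct)
  case (less q)
  consider "q = 0" | "q = 1" | "q = 2" | k where "q = Suc (Suc (Suc k))"
    by (metis One_nat_def Suc_1 not0_implies_Suc)
  then show ?case
  proof cases
    case 1 then show ?thesis by (simp add: valg_def)
  next
    case 2 then show ?thesis by (simp add: valg_def hg01[unfolded One_nat_def])
  next
    case 3 then show ?thesis by (simp add: valg_def hg02)
  next
    case 4
    have IH: "game_eq (hg 0 (Suc (Suc k))) (valg 0 (Suc (Suc k)))" using less 4 by simp
    have A: "game_eq (hg 0 q) (gplus (valg 0 (Suc (Suc k))) (gplus up_g star_g))"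
      using eqv_trans[OF E_W[of k] plus_cong_r[OF IH]] 4 by simp
    have B: "game_eq (gplus (valg 0 (Suc (Suc k))) (gplus up_g star_g)) (valg 0 q)"
    proof (cases "odd k")
      case True
      then show ?thesis using alg2[of "ups (Suc k)"] 4 by (simp add: valg_def)
    next
      case False
      then show ?thesis using alg1[of "ups (Suc k)"] 4 by (simp add: valg_def)
    qed
    show ?thesis using eqv_trans[OF A B] .
  qed
qed

lemma NG: "(k \<le> m \<longrightarrow> ge (nat_g m) (nat_g k)) \<and> (k < m \<longrightarrow> gf (nat_g m) (nat_g k))"
proof (induction "m + k" arbitrary: m k rule: less_induct)
  case less
  note IH = less[rule_format]
  have t1: "ge (nat_g m) (nat_g k)" if h: "k \<le> m"
  proof (rule ge_intro)
    fix r assume "r \<in> set (rights (nat_g m))"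
    then show "gf r (nat_g k)" by (cases m) auto
  next
    fix l assume l: "l \<in> set (lefts (nat_g k))"
    then obtain k' where k': "k = Suc k'" "l = nat_g k'" by (cases k) auto
    then show "gf (nat_g m) l" using IH[of m k'] h by auto
  qed
  have t2: "gf (nat_g m) (nat_g k)" if h: "k < m"
  proof -
    obtain m' where m': "m = Suc m'" using h by (cases m) auto
    then show ?thesis using IH[of m' k] h by (intro gf_introL[of "nat_g m'"]) auto
  qed
  show ?case using t1 t2 by blast
qed

lemma NG_ge: "k \<le> m \<Longrightarrow> ge (nat_g m) (nat_g k)" using NG by blast
lemma NG_gf: "k < m \<Longrightarrow> gf (nat_g m) (nat_g k)" using NG by blast

lemma valg_lt: "q < p \<Longrightarrow> valg p q = nat_g (p - q)"
  by (simp add: valg_def int_g_def nat_diff_distrib)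
lemma valg_ge: "1 \<le> p \<Longrightarrow> p \<le> q \<Longrightarrow> valg p q = half_pow (q - p + 1)"
  by (simp add: valg_def)
lemma valg00: "valg 0 0 = zero_g" by (simp add: valg_def)

lemma hg_val: "game_eq (hg p q) (valg p q)"
proof (induction "p + q" arbitrary: p q rule: less_induct)
  case less
  have IH: "\<And>p' q'. p' + q' < p + q \<Longrightarrow> game_eq (hg p' q') (valg p' q')" using less by blast
  show ?case
  proof (cases p)
    case 0 then show ?thesis using E_val by simp
  next
    case (Suc p')
    have L: "lefts (hg p q) = [zero_g, hg p' q]" using Suc by (simp add: hg_lr)
    have R: "rights (hg p q) = (if q = 0 then [] else [hg p (q - 1)])" using Suc by (simp add: hg_lr)
    have IHl: "game_eq (hg p' q) (valg p' q)" using IH Suc by simp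
    have IHr: "q \<noteq> 0 \<Longrightarrow> game_eq (hg p (q - 1)) (valg p (q - 1))" using IH by simp
    show ?thesis
    proof (cases "q < p")
      case True
      define k where "k = p - q"
      have k1: "k \<ge> 1" using True k_def by simp
      have V: "valg p q = nat_g k" using True valg_lt k_def by simp
      have 1: "ge (hg p q) (nat_g k)"
      proof (rule ge_intro)
        fix r assume r: "r \<in> set (rights (hg p q))"
        then have q0: "q \<noteq> 0" and rr: "r = hg p (q - 1)" using R by (auto split: if_splits)
        have "valg p (q - 1) = nat_g (Suc k)" using q0 True k_def by (simp add: valg_lt Suc_diff_le)
        then have e: "game_eq (nat_g (Suc k)) (hg p (q - 1))" using eqv_sym[OF IHr[OF q0]] by simp
        show "gf r (nat_g k)" using gf_cong[OF e eqv_refl NG_gf[of k "Suc k"]] rr by simp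
      next
        fix l assume "l \<in> set (lefts (nat_g k))"
        then obtain k' where k': "k = Suc k'" "l = nat_g k'" by (cases k) auto
        show "gf (hg p q) l"
        proof (cases "k' = 0")
          case True then show ?thesis using k' L by (intro gf_introL[of zero_g]) auto
        next
          case False
          then have "q < p'" using k' k_def Suc by simp
          moreover have "p' - q = k'" using k' k_def Suc by arith
          ultimately have "valg p' q = nat_g k'" by (simp add: valg_lt)
          then show ?thesis using k' L eqv_ge[OF IHl] by (intro gf_introL[of "hg p' q"]) auto
        qed
      qed
      have 2: "ge (nat_g k) (hg p q)"
      proof (rule ge_intro)
        fix r assume "r \<in> set (rights (nat_g k))"
        then show "gf r (hg p q)" by (cases k) auto
      next
        fix l assume "l \<in> set (lefts (hg p q))"
        then have "l = zero_g \<or> l = hg p' q" using L by simp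
        moreover obtain k' where k': "k = Suc k'" using k1 by (cases k) auto
        moreover have "gf (nat_g k) zero_g"
          using NG_ge[of 0 k'] k' by (intro gf_introL[of "nat_g k'"]) auto
        moreover have "gf (nat_g k) (hg p' q)"
        proof (cases "q < p'")
          case True
          moreover have "p' - q = k'" using k' k_def Suc by arith
          ultimately have "valg p' q = nat_g k'" by (simp add: valg_lt)
          then have e: "game_eq (nat_g k') (hg p' q)" using eqv_sym[OF IHl] by simp
          show ?thesis using gf_cong[OF eqv_refl e NG_gf[of k' k]] k' by simp
        next
          case False
          then have qp: "q = p'" using \<open>q < p\<close> Suc by simp
          then have k1': "k = 1" using k_def Suc by simp
          show ?thesis
          proof (cases "p' = 0")
            case True
            then have "valg p' q = zero_g" using qp valg00 by simp
            then show ?thesis using gf_cong[OF eqv_refl eqv_sym[OF IHl], of "nat_g k"] k1'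
              by (simp add: gf_introL[of zero_g] zero_g_def)
          next
            case False
            then have "valg p' q = half_pow 1" using qp valg_ge by simp
            moreover have "gf (nat_g 1) (half_pow 1)"
              by (rule gf_introR[of "half_pow 0"]) auto
            ultimately show ?thesis using gf_cong[OF eqv_refl eqv_sym[OF IHl], of "nat_g k"] k1' by simp
          qed
        qed
        ultimately show "gf (nat_g k) l" by blast
      qed
      show ?thesis using 1 2 V by (simp add: eqv_iff)
    next
      case False
      define j where "j = q - p"
      have q0: "q \<noteq> 0" using False Suc by simp
      have V: "valg p q = half_pow (Suc j)" using False Suc j_def valg_ge by simp
      have Vr: "valg p (q - 1) = half_pow j"
      proof (cases "q = p")
        case True
        then show ?thesis using j_def Suc by (simp add: valg_lt int_g_def)
      next
        case False
        have "valg p (q - 1) = half_pow (q - 1 - p + 1)" using False \<open>\<not> q < p\<close> Suc by (intro valg_ge) auto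
        moreover have "q - 1 - p + 1 = j" using False \<open>\<not> q < p\<close> j_def by arith
        ultimately show ?thesis by metis
      qed
      have IHr': "game_eq (hg p (q - 1)) (half_pow j)" using IHr[OF q0] Vr by simp
      have 1: "ge (hg p q) (half_pow (Suc j))"
      proof (rule ge_intro)
        fix r assume r: "r \<in> set (rights (hg p q))"
        then have rr: "r = hg p (q - 1)" using R by (auto split: if_splits)
        have "gf (half_pow j) (half_pow (Suc j))" by (rule gf_introR[of "half_pow j"]) auto
        then show "gf r (half_pow (Suc j))" using gf_cong[OF eqv_sym[OF IHr'] eqv_refl] rr by simp
      next
        fix l assume "l \<in> set (lefts (half_pow (Suc j)))"
        then have "l = zero_g" by simp
        then show "gf (hg p q) l" using L by (intro gf_introL[of zero_g]) auto
      qed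
      have 2: "ge (half_pow (Suc j)) (hg p q)"
      proof (rule ge_intro)
        fix r assume "r \<in> set (rights (half_pow (Suc j)))"
        then have "r = half_pow j" by simp
        then show "gf r (hg p q)" using R q0 eqv_ge'[OF IHr'] by (intro gf_introR[of "hg p (q - 1)"]) auto
      next
        fix l assume "l \<in> set (lefts (hg p q))"
        then have "l = zero_g \<or> l = hg p' q" using L by simp
        moreover have "gf (half_pow (Suc j)) zero_g" by (rule gf_introL[of zero_g]) auto
        moreover have "gf (half_pow (Suc j)) (hg p' q)"
        proof (cases p')
          case 0
          obtain q' where q': "q = Suc q'" using q0 by (cases q) auto
          show ?thesis using 0 q' HE[of "Suc j" q'] by (intro gf_introR[of "hg 0 q'"]) (auto simp: hg_lr)
        next
          case (Suc p'')
          then have "valg p' q = half_pow (q - p' + 1)" using \<open>\<not> q < p\<close> \<open>p = Suc p'\<close> by (intro valg_ge) auto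
          moreover have "q - p' + 1 = Suc (Suc j)" using \<open>\<not> q < p\<close> j_def \<open>p = Suc p'\<close> by arith
          ultimately have "valg p' q = half_pow (Suc (Suc j))" by metis
          moreover have "gf (half_pow (Suc j)) (half_pow (Suc (Suc j)))" by (rule gf_introR[of "half_pow (Suc j)"]) auto
          ultimately show ?thesis using gf_cong[OF eqv_refl eqv_sym[OF IHl]] by simp
        qed
        ultimately show "gf (half_pow (Suc j)) l" by blast
      qed
      show ?thesis using 1 2 V by (simp add: eqv_iff)
    qed
  qed
qed



declare dg.simps[simp del]

lemma dg_swap: "dg V E (swap_col \<circ> c) D = neg (dg V E c D)"
proof (induction V E c D rule: dg.induct)
  case (1 V E c D)
  have s1: "(\<lambda>v. (swap_col \<circ> c) v \<noteq> ColB \<and> P v) = (\<lambda>v. c v \<noteq> ColA \<and> P v)" for P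
    by (rule ext) (auto simp: swap_col_def split: color.splits)
  have s2: "(\<lambda>v. (swap_col \<circ> c) v \<noteq> ColA \<and> P v) = (\<lambda>v. c v \<noteq> ColB \<and> P v)" for P
    by (rule ext) (auto simp: swap_col_def split: color.splits)
  show ?case
    unfolding dg.simps[of V E c D] dg.simps[of V E "swap_col \<circ> c" D]
    apply (simp only: s1 s2 neg.simps map_map)
    using 1 by (auto simp: o_def intro!: map_cong)
qed

lemma dg_lefts: "finite V \<Longrightarrow> x \<in> set (lefts (dg V E c D)) \<longleftrightarrow>
   (\<exists>v\<in>V. c v \<noteq> ColB \<and> \<not> cnbhd V E v \<subseteq> D \<and> x = dg V E c (D \<union> cnbhd V E v))"
  by (subst dg.simps) auto
lemma dg_rights: "finite V \<Longrightarrow> x \<in> set (rights (dg V E c D)) \<longleftrightarrow>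
   (\<exists>v\<in>V. c v \<noteq> ColA \<and> \<not> cnbhd V E v \<subseteq> D \<and> x = dg V E c (D \<union> cnbhd V E v))"
  by (subst dg.simps) auto

lemma cn0: "cnbhd {0..n} star_adj 0 = {0..n}"
  by (auto simp: cnbhd_def star_adj_def)
lemma cni: "i \<in> {1..n} \<Longrightarrow> cnbhd {0..n} star_adj i = {0, i}"
  by (auto simp: cnbhd_def star_adj_def)

lemma hg_lefts_set: "p + q > 0 \<Longrightarrow> set (lefts (hg p q)) = {zero_g} \<union> (if p > 0 then {hg (p - 1) q} else {})"
  by (cases p; cases q) (auto simp: hg_lr)
lemma hg_rights_set: "p > 0 \<or> q > 0 \<Longrightarrow> set (rights (hg p q)) = (if q > 0 then {hg p (q - 1)} else {})"
  by (cases p; cases q) (auto simp: hg_lr)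

definition cntc :: "nat \<Rightarrow> (nat \<Rightarrow> color) \<Rightarrow> color \<Rightarrow> nat set \<Rightarrow> nat" where
  "cntc n c col D = card {i\<in>{1..n}. i \<notin> D \<and> c i = col}"

lemma cntc_step:
  assumes "i \<in> {1..n}" "i \<notin> D" 
  shows "cntc n c col (D \<union> {0, i}) = (if c i = col then cntc n c col D - 1 else cntc n c col D)"
proof -
  have "{j\<in>{1..n}. j \<notin> D \<union> {0, i} \<and> c j = col} = {j\<in>{1..n}. j \<notin> D \<and> c j = col} - {i}"
    by auto
  then show ?thesis unfolding cntc_def using assms by (auto simp: card_Diff_singleton)
qed

lemma cntc_pos: "i \<in> {1..n} \<Longrightarrow> i \<notin> D \<Longrightarrow> c i = col \<Longrightarrow> cntc n c col D > 0"
  unfolding cntc_def by (subst card_gt_0_iff) auto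

lemma cntc_ex: "cntc n c col D > 0 \<Longrightarrow> \<exists>i\<in>{1..n}. i \<notin> D \<and> c i = col"
  unfolding cntc_def by (metis (mono_tags, lifting) card.empty empty_Collect_eq less_irrefl)

lemma cntc_all: "cntc n c col {0..n} = 0"
  unfolding cntc_def by simp

lemma star_pos:
  assumes c0: "c 0 = ColA" and leaves: "\<forall>i\<in>{1..n}. c i = ColA \<or> c i = ColB"
  shows "D \<subseteq> {0..n} \<Longrightarrow> 0 \<in> D \<or> (D = {} \<and> n \<ge> 1) \<Longrightarrow>
    game_eq (dg {0..n} star_adj c D) (hg (cntc n c ColA D) (cntc n c ColB D))"
proof (induction "card ({0..n} - D)" arbitrary: D rule: less_induct)
  case less
  note inv = less.prems
  let ?N = "cnbhd {0..n} star_adj"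
  let ?pa = "cntc n c ColA D" and ?pb = "cntc n c ColB D"
  have fin: "finite {0..n::nat}" by simp
  have undom: "\<exists>j\<in>{1..n}. j \<notin> D" if v: "v \<in> {0..n}" "\<not> ?N v \<subseteq> D" for v
  proof (cases "v = 0")
    case True
    then have "\<not> {0..n} \<subseteq> D" using v cn0 by simp
    then obtain w where w: "w \<in> {0..n}" "w \<notin> D" by blast
    show ?thesis
    proof (cases "w = 0")
      case True then have "D = {} \<and> n \<ge> 1" using w inv by auto
      then show ?thesis by force
    next
      case False then show ?thesis using w by force
    qed
  next
    case False
    then have vi: "v \<in> {1..n}" using v by auto
    then have "v \<notin> D" using v cni[OF vi] inv by auto
    then show ?thesis using vi by blast
  qed
  have vnd: "v \<notin> D" if "v \<in> {1..n}" "\<not> ?N v \<subseteq> D" for v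
    using that cni[of v n] inv by auto
  have pos: "?pa + ?pb > 0" if "j \<in> {1..n}" "j \<notin> D" for j
    using that leaves cntc_pos[of j n D c ColA] cntc_pos[of j n D c ColB] by fastforce
  have IH: "game_eq (dg {0..n} star_adj c (D \<union> ?N v)) (hg (cntc n c ColA (D \<union> ?N v)) (cntc n c ColB (D \<union> ?N v)))"
    if v: "v \<in> {0..n}" "\<not> ?N v \<subseteq> D" for v
  proof (rule less.hyps)
    show "card ({0..n} - (D \<union> ?N v)) < card ({0..n} - D)"
      using dg_term[of v "{0..n}" star_adj D] v by simp
    show "D \<union> ?N v \<subseteq> {0..n}" using inv by (auto simp: cnbhd_def)
    show "0 \<in> D \<union> ?N v \<or> (D \<union> ?N v = {} \<and> n \<ge> 1)" using v by (auto simp: cnbhd_def star_adj_def)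
  qed
  have opt0: "game_eq (dg {0..n} star_adj c (D \<union> ?N 0)) zero_g" if "\<not> ?N 0 \<subseteq> D"
  proof -
    have "D \<union> ?N 0 = {0..n}" using inv cn0 by auto
    then show ?thesis using IH[of 0] that by (simp add: cntc_all)
  qed
  have optA: "game_eq (dg {0..n} star_adj c (D \<union> ?N i)) (hg (?pa - 1) ?pb)"
    if "i \<in> {1..n}" "i \<notin> D" "c i = ColA" for i
  proof -
    have "\<not> ?N i \<subseteq> D" using that cni by auto
    then show ?thesis using IH[of i] that cni[OF that(1)] cntc_step[OF that(1,2)] by auto
  qed
  have optB: "game_eq (dg {0..n} star_adj c (D \<union> ?N i)) (hg ?pa (?pb - 1))"
    if "i \<in> {1..n}" "i \<notin> D" "c i = ColB" for i
  proof -
    have "\<not> ?N i \<subseteq> D" using that cni by auto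
    then show ?thesis using IH[of i] that cni[OF that(1)] cntc_step[OF that(1,2)] by auto
  qed
  let ?G = "dg {0..n} star_adj c D" and ?H = "hg ?pa ?pb"
  have o1: "\<exists>y\<in>set (lefts ?H). game_eq x y" if hx: "x \<in> set (lefts ?G)" for x
  proof -
    obtain v where v: "v \<in> {0..n}" "c v \<noteq> ColB" "\<not> ?N v \<subseteq> D" "x = dg {0..n} star_adj c (D \<union> ?N v)"
      using iffD1[OF dg_lefts[OF fin, of x star_adj c D] hx] by blast
    obtain j where j: "j \<in> {1..n}" "j \<notin> D" using undom[OF v(1,3)] by blast
    have p: "?pa + ?pb > 0" using pos[OF j] .
    show ?thesis
    proof (cases "v = 0")
      case True
      then have "game_eq x zero_g" using opt0[OF v(3)[unfolded True]] v(4)[unfolded True] by simp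
      moreover have "zero_g \<in> set (lefts ?H)" using hg_lefts_set[OF p] by simp
      ultimately show ?thesis by blast
    next
      case False
      then have vi: "v \<in> {1..n}" using v(1) by simp
      have cA: "c v = ColA" using leaves vi v(2) by auto
      have vD: "v \<notin> D" using vnd[OF vi v(3)] .
      have "game_eq x (hg (?pa - 1) ?pb)" using optA[OF vi vD cA] v(4) by simp
      moreover have "hg (?pa - 1) ?pb \<in> set (lefts ?H)" using hg_lefts_set[OF p] cntc_pos[of v n D c ColA, OF vi vD cA] by simp
      ultimately show ?thesis by blast
    qed
  qed
  have o2: "\<exists>x\<in>set (lefts ?G). game_eq x y" if y: "y \<in> set (lefts ?H)" for y
  proof -
    have p: "?pa + ?pb > 0"
    proof (rule ccontr)
      assume "\<not> ?pa + ?pb > 0"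
      then have "?pa = 0" "?pb = 0" by auto
      then show False using y by simp
    qed
    obtain j where j: "j \<in> {1..n}" "j \<notin> D"
      using p cntc_ex[of n c ColA D] cntc_ex[of n c ColB D] by (cases "?pa > 0") auto
    have n0: "\<not> ?N 0 \<subseteq> D" using j cn0 by auto
    have yy: "y = zero_g \<or> (?pa > 0 \<and> y = hg (?pa - 1) ?pb)" using y hg_lefts_set[OF p] by (auto split: if_splits)
    show ?thesis
    proof (cases "y = zero_g")
      case True
      have "dg {0..n} star_adj c (D \<union> ?N 0) \<in> set (lefts ?G)"
        by (rule iffD2[OF dg_lefts[OF fin]], rule bexI[of _ 0]) (use n0 c0 in auto)
      then show ?thesis using opt0[OF n0] True by blast
    next
      case False
      then have pa: "?pa > 0" and yy': "y = hg (?pa - 1) ?pb" using yy by auto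
      obtain i where i: "i \<in> {1..n}" "i \<notin> D" "c i = ColA" using cntc_ex[OF pa] by blast
      then have "\<not> ?N i \<subseteq> D" using cni by auto
      then have "dg {0..n} star_adj c (D \<union> ?N i) \<in> set (lefts ?G)"
        by (intro iffD2[OF dg_lefts[OF fin]] bexI[of _ i]) (use i in auto)
      then show ?thesis using optA[OF i] yy' by blast
    qed
  qed
  have o3: "\<exists>y\<in>set (rights ?H). game_eq x y" if hx: "x \<in> set (rights ?G)" for x
  proof -
    obtain v where v: "v \<in> {0..n}" "c v \<noteq> ColA" "\<not> ?N v \<subseteq> D" "x = dg {0..n} star_adj c (D \<union> ?N v)"
      using iffD1[OF dg_rights[OF fin, of x star_adj c D] hx] by blast
    have "v \<noteq> 0" using v(2) c0 by (metis)
    then have vi: "v \<in> {1..n}" using v(1) by simp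
    have cv: "c v = ColB" using leaves vi v(2) by auto
    have vD: "v \<notin> D" using vnd[OF vi v(3)] .
    have pb: "?pb > 0" using cntc_pos[of v n D c ColB, OF vi vD cv] .
    have "hg ?pa (?pb - 1) \<in> set (rights ?H)" using hg_rights_set[of ?pa ?pb] pb by simp
    moreover have "game_eq x (hg ?pa (?pb - 1))" using optB[OF vi vD cv] v(4) by simp
    ultimately show ?thesis by blast
  qed
  have o4: "\<exists>x\<in>set (rights ?G). game_eq x y" if y: "y \<in> set (rights ?H)" for y
  proof -
    have pb: "?pb > 0"
    proof (rule ccontr)
      assume "\<not> ?pb > 0"
      then have "?pb = 0" by simp
      then show False using y by (cases ?pa) (simp_all add: hg_lr)
    qed
    then have yy: "y = hg ?pa (?pb - 1)" using y hg_rights_set[of ?pa ?pb] by auto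
    obtain i where i: "i \<in> {1..n}" "i \<notin> D" "c i = ColB" using cntc_ex[OF pb] by blast
    then have "\<not> ?N i \<subseteq> D" using cni by auto
    moreover have "c i \<noteq> ColA" using i by simp
    ultimately have "dg {0..n} star_adj c (D \<union> ?N i) \<in> set (rights ?G)"
      by (intro iffD2[OF dg_rights[OF fin]] bexI[of _ i]) (use i in auto)
    then show ?thesis using optB[OF i] yy by blast
  qed
  show ?case by (rule opt_eqv) (use o1 o2 o3 o4 in blast)+
qed

theorem theorem6:
  fixes n a b :: nat and c :: "nat \<Rightarrow> color"
  assumes "n \<ge> 2"
    and "\<forall>i\<in>{1..n}. c i = ColA \<or> c i = ColB"
    and "a = card {i \<in> {1..n}. c i = ColA}"
    and "b = n - a"
  shows "(c 0 = ColA \<longrightarrow>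
            game_eq (star_game n c)
              (if b < a then int_g (int a - int b)
               else if 1 \<le> a then half_pow (b - a + 1)
               else if odd b then gplus (ups (b - 1)) star_g
               else ups (b - 1)))
       \<and> (c 0 = ColB \<longrightarrow>
            game_eq (star_game n c) (neg (star_game n (swap_col \<circ> c))))"
proof (intro conjI impI)
  assume c0: "c 0 = ColA"
  have 1: "game_eq (star_game n c) (hg (cntc n c ColA {}) (cntc n c ColB {}))"
    unfolding star_game_def dom_game_def using assms(1) by (intro star_pos[OF c0 assms(2)]) auto
  have ca: "cntc n c ColA {} = a" by (simp add: cntc_def assms(3))
  have "{i \<in> {1..n}. c i = ColB} = {1..n} - {i \<in> {1..n}. c i = ColA}"
    using assms(2) by auto
  moreover have "card ({1..n} - {i \<in> {1..n}. c i = ColA}) = n - a"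
    by (subst card_Diff_subset) (auto simp: assms(3))
  ultimately have "card {i \<in> {1..n}. c i = ColB} = n - a" by simp
  then have cb: "cntc n c ColB {} = b" by (simp add: cntc_def assms(4))
  have "game_eq (star_game n c) (valg a b)" using eqv_trans[OF 1 hg_val] ca cb by simp
  then show "game_eq (star_game n c)
              (if b < a then int_g (int a - int b)
               else if 1 \<le> a then half_pow (b - a + 1)
               else if odd b then gplus (ups (b - 1)) star_g
               else ups (b - 1))" by (simp only: valg_def)
next
  have "neg (star_game n (swap_col \<circ> c)) = star_game n c"
    unfolding star_game_def dom_game_def dg_swap by simp
  then show "game_eq (star_game n c) (neg (star_game n (swap_col \<circ> c)))" by simp
qed


end
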